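(* The set $\mathcal{M}_1$ is affinely homeomorphic (with weak* topologies) to the set $\mathcal{M}_\tau$ of T-invariant means on $C_{ub}(\mathbb{R}_+)$.
   Context: $L^{\infty}(\mathbb{R}_+)$: real-valued essentially bounded measurable functions on $[0,\infty)$; $C_{ub}(\mathbb{R}_+)$: its closed subspace of uniformly continuous bounded functions. A mean is a positive linear functional with value $1$ at the constant $1$. $\overline{M}_1(f)=\lim_{\theta\to\infty}\limsup_{x\to\infty}\frac1\theta\int_x^{x+\theta}f(t)\,dt$, and $\mathcal{M}_1$ is the set of means $\varphi$ on $L^{\infty}(\mathbb{R}_+)$ with $\varphi(f)\le\overline{M}_1(f)$ for all $f\in L^{\infty}(\mathbb{R}_+)$. A T-invariant mean on $C_{ub}(\mathbb{R}_+)$ is a mean $\varphi$ on $C_{ub}(\mathbb{R}_+)$ with $\varphi(T_sf)=\varphi(f)$ for all $s\ge0$, $(T_sf)(x)=f(x+s)$. *)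

theory Defs
  imports "HOL-Analysis.Analysis"
begin

text \<open>Elements of L-infinity(R+) are represented by Lebesgue measurable real functions
  that are essentially bounded on [0,inf) and vanish on (-inf,0). Functionals are
  represented extensionally (value 0 outside their domain), so the weak* topology is the
  topology of pointwise convergence, i.e. the product topology restricted to the set.\<close>

definition Linf :: "(real \<Rightarrow> real) set" where
  "Linf = {f. f \<in> borel_measurable lebesgue \<and> (\<exists>B. AE x in lebesgue. \<bar>f x\<bar> \<le> B)
              \<and> (\<forall>x<0. f x = 0)}"

definition Cub :: "(real \<Rightarrow> real) set" where
  "Cub = {f. uniformly_continuous_on {0..} f \<and> bounded (f ` {0..}) \<and> (\<forall>x<0. f x = 0)}"

definition one_plus :: "real \<Rightarrow> real" where
  "one_plus x = (if 0 \<le> x then 1 else 0)"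

definition shiftT :: "real \<Rightarrow> (real \<Rightarrow> real) \<Rightarrow> real \<Rightarrow> real" where
  "shiftT s f x = (if 0 \<le> x then f (x + s) else 0)"

definition lin_on :: "(real \<Rightarrow> real) set \<Rightarrow> ((real \<Rightarrow> real) \<Rightarrow> real) \<Rightarrow> bool" where
  "lin_on D \<phi> \<longleftrightarrow> (\<forall>f\<in>D. \<forall>g\<in>D. \<forall>a b. \<phi> (\<lambda>x. a * f x + b * g x) = a * \<phi> f + b * \<phi> g)"

definition mean_Linf :: "((real \<Rightarrow> real) \<Rightarrow> real) \<Rightarrow> bool" where
  "mean_Linf \<phi> \<longleftrightarrow> lin_on Linf \<phi>
     \<and> (\<forall>f\<in>Linf. (AE x in lebesgue. 0 \<le> x \<longrightarrow> 0 \<le> f x) \<longrightarrow> 0 \<le> \<phi> f)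
     \<and> \<phi> one_plus = 1
     \<and> (\<forall>f. f \<notin> Linf \<longrightarrow> \<phi> f = 0)"

definition mean_Cub :: "((real \<Rightarrow> real) \<Rightarrow> real) \<Rightarrow> bool" where
  "mean_Cub \<phi> \<longleftrightarrow> lin_on Cub \<phi>
     \<and> (\<forall>f\<in>Cub. (\<forall>x\<ge>0. 0 \<le> f x) \<longrightarrow> 0 \<le> \<phi> f)
     \<and> \<phi> one_plus = 1
     \<and> (\<forall>f. f \<notin> Cub \<longrightarrow> \<phi> f = 0)"

definition upper_M1 :: "(real \<Rightarrow> real) \<Rightarrow> ereal" where
  "upper_M1 f = Lim at_top (\<lambda>\<theta>::real. Limsup at_top (\<lambda>x::real.
        ereal ((1 / \<theta>) * (LINT t:{x..x+\<theta>}|lebesgue. f t))))"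

definition M1 :: "((real \<Rightarrow> real) \<Rightarrow> real) set" where
  "M1 = {\<phi>. mean_Linf \<phi> \<and> (\<forall>f\<in>Linf. ereal (\<phi> f) \<le> upper_M1 f)}"

definition Mtau :: "((real \<Rightarrow> real) \<Rightarrow> real) set" where
  "Mtau = {\<phi>. mean_Cub \<phi> \<and> (\<forall>s\<ge>0. \<forall>f\<in>Cub. \<phi> (shiftT s f) = \<phi> f)}"

definition weak_star :: "((real \<Rightarrow> real) \<Rightarrow> real) set \<Rightarrow> ((real \<Rightarrow> real) \<Rightarrow> real) topology" where
  "weak_star S = subtopology (product_topology (\<lambda>_. euclideanreal) UNIV) S"

end

theory Submission
  imports Defs
begin


lemma Linf_bound:
  assumes "f \<in> Linf" shows "\<exists>B\<ge>0. AE x in lebesgue. \<bar>f x\<bar> \<le> B"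
proof -
  obtain B where "AE x in lebesgue. \<bar>f x\<bar> \<le> B" using assms unfolding Linf_def by auto
  then have "AE x in lebesgue. \<bar>f x\<bar> \<le> max B 0" by (auto elim: eventually_mono)
  then show ?thesis by (intro exI[of _ "max B 0"]) auto
qed

lemma Linf_meas: "f \<in> Linf \<Longrightarrow> f \<in> borel_measurable lebesgue"
  unfolding Linf_def by auto

lemma Linf_set_integrable:
  assumes "f \<in> Linf" shows "set_integrable lebesgue {a..b} f"
proof -
  obtain B where B: "B \<ge> 0" "AE x in lebesgue. \<bar>f x\<bar> \<le> B" using Linf_bound[OF assms] by auto
  have "integrable lebesgue (\<lambda>x. B * indicator {a..b} x)"
    by (intro integrable_mult_right integrable_real_indicator) (auto simp: emeasure_lborel_Icc_eq)
  moreover have "(\<lambda>x. indicator {a..b} x *\<^sub>R f x) \<in> borel_measurable lebesgue"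
      using Linf_meas[OF assms] by (intro borel_measurable_scaleR borel_measurable_indicator) auto
  moreover have "AE x in lebesgue. norm (indicator {a..b} x *\<^sub>R f x) \<le> norm (B * indicator {a..b} x)"
      using B(2) by eventually_elim (use B(1) in \<open>auto simp: indicator_def\<close>)
  ultimately show ?thesis unfolding set_integrable_def by (rule Bochner_Integration.integrable_bound)
qed

lemma Linf_integrable_on: "f \<in> Linf \<Longrightarrow> f integrable_on {a..b}"
  using set_lebesgue_integral_eq_integral(1)[OF Linf_set_integrable] by blast

lemma Linf_LINT: "f \<in> Linf \<Longrightarrow> (LINT t:{a..b}|lebesgue. f t) = integral {a..b} f"
  using set_lebesgue_integral_eq_integral(2)[OF Linf_set_integrable] by blast

lemma Linf_int_bound:
  assumes f: "f \<in> Linf" and B: "AE x in lebesgue. \<bar>f x\<bar> \<le> B" and ab: "a \<le> b"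
  shows "\<bar>integral {a..b} f\<bar> \<le> B * (b - a)"
proof -
  have i1: "integrable lebesgue (\<lambda>x. indicator {a..b} x *\<^sub>R f x)"
    using Linf_set_integrable[OF f] unfolding set_integrable_def .
  have i2: "integrable lebesgue (\<lambda>x. B * indicator {a..b} x)"
    by (intro integrable_mult_right integrable_real_indicator) (auto simp: emeasure_lborel_Icc_eq)
  have m: "integral\<^sup>L lebesgue (\<lambda>x. B * indicator {a..b} x) = B * (b - a)"
    using ab by simp
  have "integral\<^sup>L lebesgue (\<lambda>x. indicator {a..b} x *\<^sub>R f x) \<le> integral\<^sup>L lebesgue (\<lambda>x. B * indicator {a..b} x)"
    by (rule integral_mono_AE[OF i1 i2]) (use B in \<open>auto elim!: eventually_mono simp: indicator_def\<close>)
  moreover have "- integral\<^sup>L lebesgue (\<lambda>x. B * indicator {a..b} x) \<le> integral\<^sup>L lebesgue (\<lambda>x. indicator {a..b} x *\<^sub>R f x)"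
  proof -
    have "integral\<^sup>L lebesgue (\<lambda>x. - (B * indicator {a..b} x)) \<le> integral\<^sup>L lebesgue (\<lambda>x. indicator {a..b} x *\<^sub>R f x)"
      by (rule integral_mono_AE[OF _ i1]) (use B i2 in \<open>auto elim!: eventually_mono simp: indicator_def\<close>)
    then show ?thesis by simp
  qed
  ultimately show ?thesis
    using Linf_LINT[OF f, of a b] m unfolding set_lebesgue_integral_def by linarith
qed

lemma Linf_int_nonneg:
  assumes f: "f \<in> Linf" and P: "AE x in lebesgue. 0 \<le> x \<longrightarrow> 0 \<le> f x" and a: "0 \<le> a"
  shows "0 \<le> integral {a..b} f"
proof -
  have "0 \<le> integral\<^sup>L lebesgue (\<lambda>x. indicator {a..b} x *\<^sub>R f x)"
    by (rule integral_nonneg_AE) (use P a in \<open>auto elim!: eventually_mono simp: indicator_def\<close>)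
  then show ?thesis using Linf_LINT[OF f, of a b] unfolding set_lebesgue_integral_def by simp
qed

lemma int_shift3:
  fixes f :: "real \<Rightarrow> real"
  assumes fi: "\<And>a b. f integrable_on {a..b}" and ab: "a \<le> b" and s: "0 \<le> s"
  shows "integral {a+s..b+s} f = integral {a..b} f + integral {b..b+s} f - integral {a..a+s} f"
proof -
  have "integral {a..b} f + integral {b..b+s} f = integral {a..b+s} f"
    by (rule Henstock_Kurzweil_Integration.integral_combine) (use ab s fi in auto)
  moreover have "integral {a..a+s} f + integral {a+s..b+s} f = integral {a..b+s} f"
    by (rule Henstock_Kurzweil_Integration.integral_combine) (use ab s fi in auto)
  ultimately show ?thesis by linarith
qed

lemma int_sum:
  fixes f :: "real \<Rightarrow> real"
  assumes fi: "\<And>a b. f integrable_on {a..b}" and d: "0 \<le> d"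
  shows "integral {a..a + real n * d} f = (\<Sum>j<n. integral {a + real j * d..a + real j * d + d} f)"
proof (induction n)
  case 0
  then show ?case by simp
next
  case (Suc n)
  have "integral {a..a + real n * d} f + integral {a + real n * d..a + real n * d + d} f
        = integral {a..a + real n * d + d} f"
    by (rule Henstock_Kurzweil_Integration.integral_combine) (use d fi in \<open>auto simp: algebra_simps\<close>)
  moreover have "a + real (Suc n) * d = a + real n * d + d" by (simp add: algebra_simps)
  ultimately show ?case using Suc by (simp add: add.assoc)
qed

lemma uc_cong: fixes f g :: "real \<Rightarrow> real" shows "(\<And>x. x\<in>S \<Longrightarrow> f x = g x) \<Longrightarrow> uniformly_continuous_on S f \<Longrightarrow> uniformly_continuous_on S g"
  unfolding uniformly_continuous_on_def
proof (intro allI impI)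
  fix e :: real assume h: "\<And>x. x\<in>S \<Longrightarrow> f x = g x" and u: "\<forall>e>0. \<exists>d>0. \<forall>x\<in>S. \<forall>x'\<in>S. dist x' x < d \<longrightarrow> dist (f x') (f x) < e" and e: "0 < e"
  then obtain d where "d > 0" "\<forall>x\<in>S. \<forall>x'\<in>S. dist x' x < d \<longrightarrow> dist (f x') (f x) < e" by blast
  then show "\<exists>d>0. \<forall>x\<in>S. \<forall>x'\<in>S. dist x' x < d \<longrightarrow> dist (g x') (g x) < e" using h by auto
qed

lemma uc_subset: fixes f :: "real \<Rightarrow> real" shows "uniformly_continuous_on T f \<Longrightarrow> S \<subseteq> T \<Longrightarrow> uniformly_continuous_on S f"
  unfolding uniformly_continuous_on_def
proof (intro allI impI)
  fix e :: real assume u: "\<forall>e>0. \<exists>d>0. \<forall>x\<in>T. \<forall>x'\<in>T. dist x' x < d \<longrightarrow> dist (f x') (f x) < e" and h: "S \<subseteq> T" and e: "0 < e"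
  then obtain d where "d > 0" "\<forall>x\<in>T. \<forall>x'\<in>T. dist x' x < d \<longrightarrow> dist (f x') (f x) < e" by blast
  then show "\<exists>d>0. \<forall>x\<in>S. \<forall>x'\<in>S. dist x' x < d \<longrightarrow> dist (f x') (f x) < e" using h by (intro exI[of _ d]) auto
qed

lemma one_plus_Cub: "one_plus \<in> Cub"
proof -
  have "uniformly_continuous_on {0..} one_plus"
    by (rule uc_cong[OF _ uniformly_continuous_on_const[of _ 1]])
       (auto simp: one_plus_def)
  moreover have "bounded (one_plus ` {0..})"
    by (rule boundedI[of _ 1]) (auto simp: one_plus_def)
  ultimately show ?thesis unfolding Cub_def by (auto simp: one_plus_def)
qed

lemma Cub_bound: assumes "g \<in> Cub" shows "\<exists>M\<ge>0. \<forall>x. \<bar>g x\<bar> \<le> M"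
proof -
  obtain M where M: "\<And>y. y \<in> g ` {0..} \<Longrightarrow> norm y \<le> M"
    using assms unfolding Cub_def by (auto simp: bounded_iff)
  have "\<bar>g x\<bar> \<le> max M 0" for x
  proof (cases "x < 0")
    case True then show ?thesis using assms unfolding Cub_def by auto
  next
    case False then show ?thesis using M[of "g x"] by auto
  qed
  then show ?thesis by (intro exI[of _ "max M 0"]) auto
qed

lemma Cub_uc: "g \<in> Cub \<Longrightarrow> uniformly_continuous_on {0..} g"
  unfolding Cub_def by auto

lemma Cub_neg: "g \<in> Cub \<Longrightarrow> x < 0 \<Longrightarrow> g x = 0"
  unfolding Cub_def by auto

lemma Cub_Linf: assumes g: "g \<in> Cub" shows "g \<in> Linf"
proof -
  have c: "continuous_on {0..} g" using Cub_uc[OF g] uniformly_continuous_imp_continuous by blast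
  have "(\<lambda>x. if x \<in> {0..} then g x else 0) \<in> borel_measurable lebesgue"
    by (rule borel_measurable_if_I[OF continuous_imp_measurable_on_sets_lebesgue[OF c]]) auto
  moreover have "(\<lambda>x. if x \<in> {0..} then g x else 0) = g"
    using Cub_neg[OF g] by (auto simp: fun_eq_iff)
  ultimately have "g \<in> borel_measurable lebesgue" by simp
  moreover obtain M where "\<forall>x. \<bar>g x\<bar> \<le> M" using Cub_bound[OF g] by auto
  ultimately show ?thesis unfolding Linf_def using Cub_neg[OF g] by auto
qed

lemma Cub_lin: assumes "f \<in> Cub" "g \<in> Cub" shows "(\<lambda>x. a * f x + b * g x) \<in> Cub"
proof -
  obtain M where M: "\<forall>x. \<bar>f x\<bar> \<le> M" using Cub_bound[OF assms(1)] by auto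
  obtain N where N: "\<forall>x. \<bar>g x\<bar> \<le> N" using Cub_bound[OF assms(2)] by auto
  have "uniformly_continuous_on {0..} (\<lambda>x. a * f x + b * g x)"
    using Cub_uc[OF assms(1)] Cub_uc[OF assms(2)]
    by (intro uniformly_continuous_on_add uniformly_continuous_on_cmul_left)
  moreover have "bounded ((\<lambda>x. a * f x + b * g x) ` {0..})"
  proof (rule boundedI[of _ "\<bar>a\<bar> * M + \<bar>b\<bar> * N"])
    fix y assume "y \<in> (\<lambda>x. a * f x + b * g x) ` {0..}"
    then obtain x where y: "y = a * f x + b * g x" by auto
    have "\<bar>a * f x\<bar> \<le> \<bar>a\<bar> * M" using M by (simp add: abs_mult mult_left_mono)
    moreover have "\<bar>b * g x\<bar> \<le> \<bar>b\<bar> * N" using N by (simp add: abs_mult mult_left_mono)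
    ultimately show "norm y \<le> \<bar>a\<bar> * M + \<bar>b\<bar> * N" unfolding y by simp
  qed
  ultimately show ?thesis using assms unfolding Cub_def by auto
qed

lemma Cub_shift: assumes g: "g \<in> Cub" and s: "0 \<le> s" shows "shiftT s g \<in> Cub"
proof -
  have "uniformly_continuous_on {0..} (\<lambda>x. g (x + s))"
    by (rule uniformly_continuous_on_compose[OF uniformly_continuous_on_add[OF uniformly_continuous_on_id uniformly_continuous_on_const]])
       (rule uc_subset[OF Cub_uc[OF g]], use s in auto)
  then have "uniformly_continuous_on {0..} (shiftT s g)"
    by (rule uc_cong[rotated]) (auto simp: shiftT_def)
  moreover obtain M where M: "\<forall>x. \<bar>g x\<bar> \<le> M" using Cub_bound[OF g] by auto
  then have "bounded (shiftT s g ` {0..})"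
    by (intro boundedI[of _ M]) (auto simp: shiftT_def)
  ultimately show ?thesis unfolding Cub_def by (auto simp: shiftT_def)
qed

lemma Cub_zero: "(\<lambda>x. 0) \<in> Cub"
  using Cub_lin[OF one_plus_Cub one_plus_Cub, of 0 0] by simp

lemma Cub_sum: fixes n :: nat shows "(\<And>j. j < n \<Longrightarrow> h j \<in> Cub) \<Longrightarrow> (\<lambda>x. \<Sum>j<n. c j * h j x) \<in> Cub"
proof (induction n)
  case 0 then show ?case using Cub_zero by simp
next
  case (Suc n)
  have "(\<lambda>x. 1 * (\<Sum>j<n. c j * h j x) + c n * h n x) \<in> Cub"
    by (rule Cub_lin) (use Suc in auto)
  then show ?case by simp
qed


lemma Linf_lin: assumes f: "f \<in> Linf" and g: "g \<in> Linf" shows "(\<lambda>x. a * f x + b * g x) \<in> Linf"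
proof -
  obtain B where B: "AE x in lebesgue. \<bar>f x\<bar> \<le> B" using Linf_bound[OF f] by auto
  obtain C where C: "AE x in lebesgue. \<bar>g x\<bar> \<le> C" using Linf_bound[OF g] by auto
  have "AE x in lebesgue. \<bar>a * f x + b * g x\<bar> \<le> \<bar>a\<bar> * B + \<bar>b\<bar> * C"
    using B C
  proof eventually_elim
    case (elim x)
    have "\<bar>a * f x\<bar> \<le> \<bar>a\<bar> * B" using elim by (simp add: abs_mult mult_left_mono)
    moreover have "\<bar>b * g x\<bar> \<le> \<bar>b\<bar> * C" using elim by (simp add: abs_mult mult_left_mono)
    ultimately show ?case by simp
  qed
  moreover have "(\<lambda>x. a * f x + b * g x) \<in> borel_measurable lebesgue"
    using Linf_meas[OF f] Linf_meas[OF g] by measurable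
  ultimately show ?thesis using f g unfolding Linf_def by auto
qed

lemma int_lin:
  fixes f g :: "real \<Rightarrow> real"
  assumes "f integrable_on S" "g integrable_on S"
  shows "integral S (\<lambda>x. a * f x + b * g x) = a * integral S f + b * integral S g"
proof -
  have "integral S (\<lambda>x. a *\<^sub>R f x + b *\<^sub>R g x) = integral S (\<lambda>x. a *\<^sub>R f x) + integral S (\<lambda>x. b *\<^sub>R g x)"
    by (rule integral_add; rule integrable_cmul; rule assms)
  also have "\<dots> = a *\<^sub>R integral S f + b *\<^sub>R integral S g" by (simp only: integral_cmul)
  finally show ?thesis by simp
qed

lemma int_lin_on:
  fixes f g :: "real \<Rightarrow> real"
  assumes "f integrable_on S" "g integrable_on S"
  shows "(\<lambda>x. a * f x + b * g x) integrable_on S"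
proof -
  have "(\<lambda>x. a *\<^sub>R f x + b *\<^sub>R g x) integrable_on S"
    by (rule integrable_add; rule integrable_cmul; rule assms)
  then show ?thesis by simp
qed

definition avg1 :: "(real \<Rightarrow> real) \<Rightarrow> real \<Rightarrow> real" where
  "avg1 f x = (if 0 \<le> x then integral {x..x+1} f else 0)"

lemma Linf_shift_bound:
  assumes f: "f \<in> Linf" and B: "AE x in lebesgue. \<bar>f x\<bar> \<le> B" and ab: "a \<le> b" and s: "0 \<le> s"
  shows "\<bar>integral {a+s..b+s} f - integral {a..b} f\<bar> \<le> 2 * B * s"
proof -
  have "integral {a+s..b+s} f = integral {a..b} f + integral {b..b+s} f - integral {a..a+s} f"
    by (rule int_shift3[OF Linf_integrable_on[OF f] ab s])
  moreover have "\<bar>integral {b..b+s} f\<bar> \<le> B * s" using Linf_int_bound[OF f B, of b "b+s"] s by simp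
  moreover have "\<bar>integral {a..a+s} f\<bar> \<le> B * s" using Linf_int_bound[OF f B, of a "a+s"] s by simp
  ultimately show ?thesis by linarith
qed

lemma avg1_Cub: assumes f: "f \<in> Linf" shows "avg1 f \<in> Cub"
proof -
  obtain B where B0: "B \<ge> 0" and B: "AE x in lebesgue. \<bar>f x\<bar> \<le> B" using Linf_bound[OF f] by auto
  have lip: "\<bar>avg1 f y - avg1 f x\<bar> \<le> 2 * B * (y - x)" if "0 \<le> x" "x \<le> y" for x y
    using Linf_shift_bound[OF f B, of x "x+1" "y - x"] that by (simp add: avg1_def algebra_simps)
  have "(2*B)-lipschitz_on {0..} (avg1 f)"
  proof (rule lipschitz_onI)
    fix x y :: real assume "x \<in> {0..}" "y \<in> {0..}"
    then show "dist (avg1 f x) (avg1 f y) \<le> 2 * B * dist x y"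
      using lip[of x y] lip[of y x] by (cases "x \<le> y") (auto simp: dist_real_def abs_minus_commute)
  qed (use B0 in simp)
  then have "uniformly_continuous_on {0..} (avg1 f)" by (rule lipschitz_on_uniformly_continuous)
  moreover have "bounded (avg1 f ` {0..})"
  proof (rule boundedI[of _ B])
    fix y assume "y \<in> avg1 f ` {0..}"
    then obtain x where "x \<ge> 0" "y = avg1 f x" by auto
    then show "norm y \<le> B" using Linf_int_bound[OF f B, of x "x+1"] by (simp add: avg1_def)
  qed
  ultimately show ?thesis unfolding Cub_def by (auto simp: avg1_def)
qed

lemma avg1_lin: assumes f: "f \<in> Linf" and g: "g \<in> Linf"
  shows "avg1 (\<lambda>x. a * f x + b * g x) = (\<lambda>x. a * avg1 f x + b * avg1 g x)"
proof
  fix x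
  have "integral {x..x+1} (\<lambda>x. a * f x + b * g x) = a * integral {x..x+1} f + b * integral {x..x+1} g"
    using Linf_integrable_on[OF f] Linf_integrable_on[OF g] by (rule int_lin)
  then show "avg1 (\<lambda>x. a * f x + b * g x) x = a * avg1 f x + b * avg1 g x"
    by (simp add: avg1_def)
qed

lemma avg1_one: "avg1 one_plus = one_plus"
proof
  fix x
  show "avg1 one_plus x = one_plus x"
  proof (cases "0 \<le> x")
    case True
    then have "integral {x..x+1} one_plus = integral {x..x+1} (\<lambda>_. 1::real)"
      by (intro integral_cong) (auto simp: one_plus_def)
    then show ?thesis using True by (simp add: avg1_def one_plus_def)
  qed (auto simp: avg1_def one_plus_def)
qed

lemma avg1_nonneg: assumes f: "f \<in> Linf" and P: "AE x in lebesgue. 0 \<le> x \<longrightarrow> 0 \<le> f x"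
  shows "0 \<le> avg1 f x"
  using Linf_int_nonneg[OF f P] by (simp add: avg1_def)



lemma mean_Cub_lin: "mean_Cub \<psi> \<Longrightarrow> f \<in> Cub \<Longrightarrow> g \<in> Cub \<Longrightarrow> \<psi> (\<lambda>x. a * f x + b * g x) = a * \<psi> f + b * \<psi> g"
  unfolding mean_Cub_def lin_on_def by blast

lemma mean_Cub_pos: "mean_Cub \<psi> \<Longrightarrow> f \<in> Cub \<Longrightarrow> (\<And>x. 0 \<le> x \<Longrightarrow> 0 \<le> f x) \<Longrightarrow> 0 \<le> \<psi> f"
  unfolding mean_Cub_def by blast

lemma mean_Cub_one: "mean_Cub \<psi> \<Longrightarrow> \<psi> one_plus = 1"
  unfolding mean_Cub_def by blast

lemma psi_zero: assumes "mean_Cub \<psi>" shows "\<psi> (\<lambda>x. 0) = 0"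
  using mean_Cub_lin[OF assms one_plus_Cub one_plus_Cub, of 0 0] by simp

lemma psi_sum: fixes n :: nat
  assumes p: "mean_Cub \<psi>" and h: "\<And>j. j < n \<Longrightarrow> h j \<in> Cub"
  shows "\<psi> (\<lambda>x. \<Sum>j<n. c j * h j x) = (\<Sum>j<n. c j * \<psi> (h j))"
  using h
proof (induction n)
  case 0 then show ?case using psi_zero[OF p] by simp
next
  case (Suc n)
  have "\<psi> (\<lambda>x. 1 * (\<Sum>j<n. c j * h j x) + c n * h n x) = 1 * \<psi> (\<lambda>x. \<Sum>j<n. c j * h j x) + c n * \<psi> (h n)"
    by (rule mean_Cub_lin[OF p]) (use Suc.prems in \<open>auto intro!: Cub_sum\<close>)
  then show ?case using Suc by simp
qed

lemma psi_bound: assumes p: "mean_Cub \<psi>" and h: "h \<in> Cub" and M: "\<And>x. 0 \<le> x \<Longrightarrow> \<bar>h x\<bar> \<le> M"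
  shows "\<bar>\<psi> h\<bar> \<le> M"
proof -
  have "0 \<le> \<psi> (\<lambda>x. M * one_plus x + (-1) * h x)"
    by (rule mean_Cub_pos[OF p Cub_lin[OF one_plus_Cub h]]) (use M in \<open>force simp: one_plus_def\<close>)
  moreover have "0 \<le> \<psi> (\<lambda>x. M * one_plus x + 1 * h x)"
    by (rule mean_Cub_pos[OF p Cub_lin[OF one_plus_Cub h]]) (use M in \<open>force simp: one_plus_def\<close>)
  ultimately show ?thesis
    using mean_Cub_lin[OF p one_plus_Cub h, of M "-1"] mean_Cub_lin[OF p one_plus_Cub h, of M 1] mean_Cub_one[OF p]
    by (simp add: abs_le_iff)
qed

lemma Mtau_mean: "\<psi> \<in> Mtau \<Longrightarrow> mean_Cub \<psi>"
  unfolding Mtau_def by blast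

lemma Mtau_inv: "\<psi> \<in> Mtau \<Longrightarrow> 0 \<le> s \<Longrightarrow> f \<in> Cub \<Longrightarrow> \<psi> (shiftT s f) = \<psi> f"
  unfolding Mtau_def by blast

lemma psi_le: assumes p: "\<psi> \<in> Mtau" and h: "h \<in> Cub" and s: "0 \<le> s" and c: "\<And>x. s \<le> x \<Longrightarrow> h x \<le> c"
  shows "\<psi> h \<le> c"
proof -
  have m: "mean_Cub \<psi>" using Mtau_mean[OF p] .
  have hs: "shiftT s h \<in> Cub" using Cub_shift[OF h s] .
  have "0 \<le> \<psi> (\<lambda>x. c * one_plus x + (-1) * shiftT s h x)"
    by (rule mean_Cub_pos[OF m Cub_lin[OF one_plus_Cub hs]]) (use c s in \<open>auto simp: one_plus_def shiftT_def\<close>)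
  then show ?thesis
    using mean_Cub_lin[OF m one_plus_Cub hs, of c "-1"] mean_Cub_one[OF m] Mtau_inv[OF p s h] by simp
qed

lemma riemann_piece:
  fixes g :: "real \<Rightarrow> real"
  assumes c: "continuous_on {u..u+d} g" and d: "0 \<le> d" and e: "\<And>t. t \<in> {u..u+d} \<Longrightarrow> \<bar>g t - g u\<bar> \<le> e"
  shows "\<bar>integral {u..u+d} g - d * g u\<bar> \<le> e * d"
proof -
  have gi: "g integrable_on {u..u+d}" using c integrable_continuous_interval by blast
  have "integral {u..u+d} (\<lambda>t. g t - g u) = integral {u..u+d} g - d * g u"
    using integral_diff[OF gi integrable_const_ivl[of "g u" u "u+d"]] d by simp
  moreover have "norm (integral {u..u+d} (\<lambda>t. g t - g u)) \<le> e * (u + d - u)"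
    by (rule integral_bound) (use d e c in \<open>auto intro!: continuous_intros\<close>)
  ultimately show ?thesis by simp
qed

lemma psi_avg1: assumes p: "\<psi> \<in> Mtau" and g: "g \<in> Cub" shows "\<psi> (avg1 g) = \<psi> g"
proof -
  have mc: "mean_Cub \<psi>" using Mtau_mean[OF p] .
  have gL: "g \<in> Linf" using Cub_Linf[OF g] .
  have ag: "avg1 g \<in> Cub" using avg1_Cub[OF gL] .
  have uc: "uniformly_continuous_on {0..} g" using Cub_uc[OF g] .
  have cont: "continuous_on {0..} g" using uniformly_continuous_imp_continuous[OF uc] .
  have main: "\<bar>\<psi> (avg1 g) - \<psi> g\<bar> \<le> e" if e: "e > 0" for e
  proof -
    obtain \<delta> where \<delta>: "\<delta> > 0" "\<And>x x'. x \<in> {0..} \<Longrightarrow> x' \<in> {0..} \<Longrightarrow> dist x' x < \<delta> \<Longrightarrow> dist (g x') (g x) < e"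
      using uc e unfolding uniformly_continuous_on_def by metis
    obtain m :: nat where m: "m > 0" "inverse (real m) < \<delta>" using ex_inverse_of_nat_less[OF \<delta>(1)] by auto
    define d where "d = 1 / real m"
    have d0: "0 < d" using m by (simp add: d_def)
    have dd: "d < \<delta>" using m by (simp add: d_def inverse_eq_divide)
    have md: "real m * d = 1" using m by (simp add: d_def)
    define R where "R = (\<lambda>x. \<Sum>j<m. d * shiftT (real j * d) g x)"
    have hC: "shiftT (real j * d) g \<in> Cub" for j using Cub_shift[OF g] d0 by simp
    have RC: "R \<in> Cub" unfolding R_def by (rule Cub_sum) (rule hC)
    have psiR: "\<psi> R = \<psi> g"
    proof -
      have "\<psi> R = (\<Sum>j<m. d * \<psi> (shiftT (real j * d) g))"
        unfolding R_def by (rule psi_sum[OF mc hC])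
      also have "\<dots> = (\<Sum>j<m. d * \<psi> g)"
        using Mtau_inv[OF p _ g] d0 by simp
      also have "\<dots> = \<psi> g" using md by simp
      finally show ?thesis .
    qed
    have Dbound: "\<bar>1 * avg1 g x + (-1) * R x\<bar> \<le> e" if x: "0 \<le> x" for x
    proof -
      have "avg1 g x = integral {x..x + real m * d} g" using x md by (simp add: avg1_def)
      also have "\<dots> = (\<Sum>j<m. integral {x + real j * d..x + real j * d + d} g)"
        by (rule int_sum[OF Linf_integrable_on[OF gL]]) (use d0 in simp)
      finally have A: "avg1 g x = (\<Sum>j<m. integral {x + real j * d..x + real j * d + d} g)" .
      have Rx: "R x = (\<Sum>j<m. d * g (x + real j * d))" using x by (simp add: R_def shiftT_def)
      have piece: "\<bar>integral {x + real j * d..x + real j * d + d} g - d * g (x + real j * d)\<bar> \<le> e * d" for j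
      proof (rule riemann_piece)
        show "continuous_on {x + real j * d..x + real j * d + d} g"
          by (rule continuous_on_subset[OF cont]) (use x d0 in auto)
        show "0 \<le> d" using d0 by simp
        fix t assume t: "t \<in> {x + real j * d..x + real j * d + d}"
        have "0 \<le> real j * d" using d0 by simp
        then have "dist t (x + real j * d) < \<delta>" using t dd by (auto simp: dist_real_def)
        moreover have t1: "x + real j * d \<le> t" using t by simp
        moreover have "0 \<le> t" "0 \<le> x + real j * d" using t1 x \<open>0 \<le> real j * d\<close> by linarith+
        ultimately have "dist (g t) (g (x + real j * d)) < e"
          by (intro \<delta>(2)) auto
        then show "\<bar>g t - g (x + real j * d)\<bar> \<le> e" by (simp add: dist_real_def)
      qed
      have "\<bar>avg1 g x - R x\<bar> = \<bar>\<Sum>j<m. (integral {x + real j * d..x + real j * d + d} g - d * g (x + real j * d))\<bar>"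
        unfolding A Rx by (simp add: sum_subtractf)
      also have "\<dots> \<le> (\<Sum>j<m. \<bar>integral {x + real j * d..x + real j * d + d} g - d * g (x + real j * d)\<bar>)"
        by (rule sum_abs)
      also have "\<dots> \<le> real (card {..<m}) * (e * d)"
        by (rule sum_bounded_above) (rule piece)
      also have "\<dots> = e" using md by (simp add: algebra_simps)
      finally show ?thesis by simp
    qed
    have "\<bar>\<psi> (\<lambda>x. 1 * avg1 g x + (-1) * R x)\<bar> \<le> e"
      by (rule psi_bound[OF mc Cub_lin[OF ag RC] Dbound])
    then show ?thesis using mean_Cub_lin[OF mc ag RC, of 1 "-1"] psiR by simp
  qed
  show ?thesis
  proof (rule ccontr)
    assume "\<psi> (avg1 g) \<noteq> \<psi> g"
    then have "\<bar>\<psi> (avg1 g) - \<psi> g\<bar> > 0" by simp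
    then show False using main[of "\<bar>\<psi> (avg1 g) - \<psi> g\<bar> / 2"] by simp
  qed
qed



lemma M1_mean: "\<phi> \<in> M1 \<Longrightarrow> mean_Linf \<phi>" unfolding M1_def by blast
lemma M1_upper: "\<phi> \<in> M1 \<Longrightarrow> f \<in> Linf \<Longrightarrow> ereal (\<phi> f) \<le> upper_M1 f" unfolding M1_def by blast

lemma mean_Linf_lin: "mean_Linf \<phi> \<Longrightarrow> f \<in> Linf \<Longrightarrow> g \<in> Linf \<Longrightarrow> \<phi> (\<lambda>x. a * f x + b * g x) = a * \<phi> f + b * \<phi> g"
  unfolding mean_Linf_def lin_on_def by blast

lemma upper_zero:
  assumes dL: "d \<in> Linf" and C: "\<And>x \<theta>. 0 \<le> x \<Longrightarrow> 0 < \<theta> \<Longrightarrow> \<bar>integral {x..x+\<theta>} d\<bar> \<le> C"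
  shows "upper_M1 d = 0"
proof -
  define L where "L = (\<lambda>\<theta>::real. Limsup at_top (\<lambda>x::real. ereal ((1 / \<theta>) * integral {x..x+\<theta>} d)))"
  have ud: "upper_M1 d = Lim at_top L"
    unfolding upper_M1_def L_def by (simp add: Linf_LINT[OF dL])
  have lim0: "((\<lambda>\<theta>::real. C / \<theta>) \<longlongrightarrow> 0) at_top"
    by (rule tendsto_divide_0[OF tendsto_const filterlim_at_top_imp_at_infinity[OF filterlim_ident]])
  have lim1: "((\<lambda>\<theta>::real. - (C / \<theta>)) \<longlongrightarrow> 0) at_top"
    using tendsto_minus[OF lim0] by simp
  have bnd: "ereal (- (C / \<theta>)) \<le> L \<theta> \<and> L \<theta> \<le> ereal (C / \<theta>)" if th: "0 < \<theta>" for \<theta>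
  proof -
    have ev: "\<forall>\<^sub>F x in at_top. - (C / \<theta>) \<le> (1 / \<theta>) * integral {x..x+\<theta>} d \<and> (1 / \<theta>) * integral {x..x+\<theta>} d \<le> C / \<theta>"
      using eventually_ge_at_top[of "0::real"]
    proof eventually_elim
      case (elim x)
      have "\<bar>integral {x..x+\<theta>} d\<bar> \<le> C" using C[OF elim th] .
      then have "\<bar>(1/\<theta>) * integral {x..x+\<theta>} d\<bar> \<le> C / \<theta>" using th by (simp add: abs_mult divide_right_mono)
      then show ?case unfolding abs_le_iff by linarith
    qed
    have "ereal (- (C / \<theta>)) \<le> L \<theta>" unfolding L_def
      by (rule le_Limsup) (use ev in \<open>auto elim: eventually_mono\<close>)
    moreover have "L \<theta> \<le> ereal (C / \<theta>)" unfolding L_def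
      by (rule Limsup_bounded) (use ev in \<open>auto elim: eventually_mono\<close>)
    ultimately show ?thesis by simp
  qed
  have "(L \<longlongrightarrow> ereal 0) at_top"
  proof (rule tendsto_sandwich[of "\<lambda>\<theta>. ereal (- (C / \<theta>))" L _ "\<lambda>\<theta>. ereal (C / \<theta>)"])
    show "\<forall>\<^sub>F \<theta> in at_top. ereal (- (C / \<theta>)) \<le> L \<theta>"
      using eventually_gt_at_top[of "0::real"] by eventually_elim (use bnd in auto)
    show "\<forall>\<^sub>F \<theta> in at_top. L \<theta> \<le> ereal (C / \<theta>)"
      using eventually_gt_at_top[of "0::real"] by eventually_elim (use bnd in auto)
    show "((\<lambda>\<theta>. ereal (- (C / \<theta>))) \<longlongrightarrow> ereal 0) at_top" using lim1 by (rule tendsto_ereal)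
    show "((\<lambda>\<theta>. ereal (C / \<theta>)) \<longlongrightarrow> ereal 0) at_top" using lim0 by (rule tendsto_ereal)
  qed
  then show ?thesis unfolding ud by (simp add: tendsto_Lim)
qed

lemma phi_zero:
  assumes p: "\<phi> \<in> M1" and dL: "d \<in> Linf" and C: "\<And>x \<theta>. 0 \<le> x \<Longrightarrow> 0 < \<theta> \<Longrightarrow> \<bar>integral {x..x+\<theta>} d\<bar> \<le> C"
  shows "\<phi> d = 0"
proof -
  have "ereal (\<phi> d) \<le> 0" using M1_upper[OF p dL] upper_zero[OF dL C] by simp
  moreover
  have nL: "(\<lambda>x. (-1) * d x + 0 * d x) \<in> Linf" using Linf_lin[OF dL dL] .
  have nb: "\<bar>integral {x..x+\<theta>} (\<lambda>x. (-1) * d x + 0 * d x)\<bar> \<le> C" if "0 \<le> x" "0 < \<theta>" for x \<theta>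
    using C[OF that] int_lin[OF Linf_integrable_on[OF dL] Linf_integrable_on[OF dL], where a="-1" and b=0] by simp
  have "ereal (\<phi> (\<lambda>x. (-1) * d x + 0 * d x)) \<le> 0" using M1_upper[OF p nL] upper_zero[OF nL nb] by simp
  then have "ereal (- \<phi> d) \<le> 0" using mean_Linf_lin[OF M1_mean[OF p] dL dL, of "-1" 0] by simp
  ultimately show ?thesis by simp
qed

lemma phi_diff_zero:
  assumes p: "\<phi> \<in> M1" and fL: "f \<in> Linf" and gL: "g \<in> Linf"
    and C: "\<And>x \<theta>. 0 \<le> x \<Longrightarrow> 0 < \<theta> \<Longrightarrow> \<bar>integral {x..x+\<theta>} f - integral {x..x+\<theta>} g\<bar> \<le> C"
  shows "\<phi> f = \<phi> g"
proof -
  have dL: "(\<lambda>x. 1 * f x + (-1) * g x) \<in> Linf" using Linf_lin[OF fL gL] .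
  have "\<phi> (\<lambda>x. 1 * f x + (-1) * g x) = 0"
  proof (rule phi_zero[OF p dL])
    fix x \<theta> :: real assume "0 \<le> x" "0 < \<theta>"
    then show "\<bar>integral {x..x+\<theta>} (\<lambda>x. 1 * f x + (-1) * g x)\<bar> \<le> C"
      using C[of x \<theta>] int_lin[OF Linf_integrable_on[OF fL] Linf_integrable_on[OF gL], where a=1 and b="-1"] by simp
  qed
  then show ?thesis using mean_Linf_lin[OF M1_mean[OF p] fL gL, of 1 "-1"] by simp
qed

lemma phi_shift: assumes p: "\<phi> \<in> M1" and g: "g \<in> Cub" and s: "0 \<le> s"
  shows "\<phi> (shiftT s g) = \<phi> g"
proof -
  have gL: "g \<in> Linf" using Cub_Linf[OF g] .
  have sL: "shiftT s g \<in> Linf" using Cub_Linf[OF Cub_shift[OF g s]] .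
  obtain B where B: "AE x in lebesgue. \<bar>g x\<bar> \<le> B" using Linf_bound[OF gL] by auto
  show ?thesis
  proof (rule phi_diff_zero[OF p sL gL])
    fix x \<theta> :: real assume x: "0 \<le> x" and th: "0 < \<theta>"
    have "integral {x..x+\<theta>} (shiftT s g) = integral {x..x+\<theta>} (\<lambda>t. g (t + s))"
      by (rule integral_cong) (use x in \<open>auto simp: shiftT_def\<close>)
    also have "\<dots> = integral {x+s..x+\<theta>+s} g"
      using integral_shift_real_ivl[of "x+s" s "x+\<theta>+s" g] by simp
    finally show "\<bar>integral {x..x+\<theta>} (shiftT s g) - integral {x..x+\<theta>} g\<bar> \<le> 2 * B * s"
      using Linf_shift_bound[OF gL B, of x "x+\<theta>" s] th s by (simp add: add.commute add.left_commute)
  qed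
qed



lemma int_shift3':
  fixes f :: "real \<Rightarrow> real"
  assumes fi: "f integrable_on {a..b+s}" and ab: "a \<le> b" and s: "0 \<le> s"
  shows "integral {a+s..b+s} f = integral {a..b} f + integral {b..b+s} f - integral {a..a+s} f"
proof -
  have "integral {a..b} f + integral {b..b+s} f = integral {a..b+s} f"
    by (rule Henstock_Kurzweil_Integration.integral_combine) (use ab s fi in auto)
  moreover have "integral {a..a+s} f + integral {a+s..b+s} f = integral {a..b+s} f"
    by (rule Henstock_Kurzweil_Integration.integral_combine) (use ab s fi in auto)
  ultimately show ?thesis by linarith
qed

lemma avg1_int:
  assumes f: "f \<in> Linf" and B0: "0 \<le> B" and B: "AE x in lebesgue. \<bar>f x\<bar> \<le> B"
    and x: "0 \<le> x" and th: "0 \<le> \<theta>"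
  shows "\<bar>integral {x..x+\<theta>} f - integral {x..x+\<theta>} (avg1 f)\<bar> \<le> 2 * B"
proof -
  define G where "G u = integral {0..u} f" for u
  have fi: "f integrable_on {a..b}" for a b using Linf_integrable_on[OF f] .
  have Gdiff: "G v - G u = integral {u..v} f" if "0 \<le> u" "u \<le> v" for u v
  proof -
    have "integral {0..u} f + integral {u..v} f = integral {0..v} f"
      by (rule Henstock_Kurzweil_Integration.integral_combine) (use that fi in auto)
    then show ?thesis unfolding G_def by linarith
  qed
  have Glip: "\<bar>G v - G u\<bar> \<le> B * (v - u)" if "0 \<le> u" "u \<le> v" for u v
    using Gdiff[OF that] Linf_int_bound[OF f B that(2)] by simp
  have "B-lipschitz_on {0..} G"
  proof (rule lipschitz_onI)
    fix u v :: real assume "u \<in> {0..}" "v \<in> {0..}"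
    then show "dist (G u) (G v) \<le> B * dist u v"
      using Glip[of u v] Glip[of v u] by (cases "u \<le> v") (auto simp: dist_real_def abs_minus_commute)
  qed (rule B0)
  then have Gc: "continuous_on {0..} G" by (rule lipschitz_on_continuous_on)
  have Gci: "continuous_on {a..b} G" if "0 \<le> a" for a b
    by (rule continuous_on_subset[OF Gc]) (use that in auto)
  have Gi: "G integrable_on {a..b}" if "0 \<le> a" for a b
    using Gci[OF that] integrable_continuous_interval by blast
  have av: "avg1 f u = G (u + 1) - G u" if "0 \<le> u" for u
    using Gdiff[of u "u+1"] that by (simp add: avg1_def)
  have G1i: "(\<lambda>u. G (u + 1)) integrable_on {x..x+\<theta>}"
    using integrable_shift_real_ivl[OF Gi[of "x+1" "x+\<theta>+1"], of 1] x by simp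
  have "integral {x..x+\<theta>} (avg1 f) = integral {x..x+\<theta>} (\<lambda>u. G (u + 1) - G u)"
    by (rule integral_cong) (use x av in auto)
  also have "\<dots> = integral {x..x+\<theta>} (\<lambda>u. G (u + 1)) - integral {x..x+\<theta>} G"
    by (rule integral_diff[OF G1i Gi]) (rule x)
  also have "integral {x..x+\<theta>} (\<lambda>u. G (u + 1)) = integral {x+1..x+\<theta>+1} G"
    using integral_shift_real_ivl[of "x+1" 1 "x+\<theta>+1" G] by simp
  also have "\<dots> = integral {x..x+\<theta>} G + integral {x+\<theta>..x+\<theta>+1} G - integral {x..x+1} G"
    by (rule int_shift3'[OF Gi]) (use x th in auto)
  finally have A: "integral {x..x+\<theta>} (avg1 f) = integral {x+\<theta>..x+\<theta>+1} G - integral {x..x+1} G"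
    by simp
  have piece: "\<bar>integral {u..u+1} G - 1 * G u\<bar> \<le> B * 1" if u: "0 \<le> u" for u
  proof (rule riemann_piece)
    show "continuous_on {u..u + 1} G" by (rule Gci[OF u])
    fix t assume "t \<in> {u..u+1}"
    then show "\<bar>G t - G u\<bar> \<le> B" using Glip[of u t] u B0
      by (smt (verit, best) atLeastAtMost_iff mult_left_le)
  qed simp
  have If: "integral {x..x+\<theta>} f = G (x+\<theta>) - G x" using Gdiff[of x "x+\<theta>"] x th by simp
  show ?thesis using piece[OF x] piece[of "x+\<theta>"] x th unfolding A If by simp
qed

lemma phi_avg1: assumes p: "\<phi> \<in> M1" and f: "f \<in> Linf" shows "\<phi> (avg1 f) = \<phi> f"
proof -
  obtain B where B0: "B \<ge> 0" and B: "AE x in lebesgue. \<bar>f x\<bar> \<le> B" using Linf_bound[OF f] by auto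
  have "\<phi> f = \<phi> (avg1 f)"
    by (rule phi_diff_zero[OF p f Cub_Linf[OF avg1_Cub[OF f]], where C="2*B"]) (use avg1_int[OF f B0 B] in auto)
  then show ?thesis by simp
qed



definition Lf :: "(real \<Rightarrow> real) \<Rightarrow> real \<Rightarrow> ereal" where
  "Lf f \<theta> = Limsup at_top (\<lambda>x. ereal ((1/\<theta>) * integral {x..x+\<theta>} f))"

lemma upper_eq: "f \<in> Linf \<Longrightarrow> upper_M1 f = Lim at_top (Lf f)"
  unfolding upper_M1_def Lf_def by (simp add: Linf_LINT)

lemma Lf_bound:
  assumes f: "f \<in> Linf" and B: "AE x in lebesgue. \<bar>f x\<bar> \<le> B" and th: "0 < \<theta>"
  shows "ereal (- B) \<le> Lf f \<theta> \<and> Lf f \<theta> \<le> ereal B"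
proof -
  have ev: "\<forall>\<^sub>F x in at_top. - B \<le> (1 / \<theta>) * integral {x..x+\<theta>} f \<and> (1 / \<theta>) * integral {x..x+\<theta>} f \<le> B"
  proof (rule always_eventually, intro allI)
    fix x
    have "\<bar>integral {x..x+\<theta>} f\<bar> \<le> B * \<theta>" using Linf_int_bound[OF f B, of x "x+\<theta>"] th by simp
    then have "\<bar>(1/\<theta>) * integral {x..x+\<theta>} f\<bar> \<le> B" using th
      by (simp add: abs_mult field_simps)
    then show "- B \<le> (1 / \<theta>) * integral {x..x+\<theta>} f \<and> (1 / \<theta>) * integral {x..x+\<theta>} f \<le> B"
      unfolding abs_le_iff by linarith
  qed
  have "ereal (- B) \<le> Lf f \<theta>" unfolding Lf_def
    by (rule le_Limsup) (use ev in \<open>auto elim: eventually_mono\<close>)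
  moreover have "Lf f \<theta> \<le> ereal B" unfolding Lf_def
    by (rule Limsup_bounded) (use ev in \<open>auto elim: eventually_mono\<close>)
  ultimately show ?thesis by simp
qed

lemma Lf_real:
  assumes f: "f \<in> Linf" and th: "0 < \<theta>"
  shows "Lf f \<theta> = ereal (real_of_ereal (Lf f \<theta>))"
proof -
  obtain B where B: "AE x in lebesgue. \<bar>f x\<bar> \<le> B" using Linf_bound[OF f] by auto
  have "ereal (- B) \<le> Lf f \<theta>" "Lf f \<theta> \<le> ereal B" using Lf_bound[OF f B th] by auto
  then have "\<bar>Lf f \<theta>\<bar> \<noteq> \<infinity>" by auto
  then show ?thesis by (simp add: ereal_real')
qed

lemma psi_Lf:
  assumes p: "\<psi> \<in> Mtau" and f: "f \<in> Linf" and n: "0 < n"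
  shows "ereal (\<psi> (avg1 f)) \<le> Lf f (real n)"
proof (rule ereal_le_epsilon2)
  fix e :: real assume e: "0 < e"
  have mc: "mean_Cub \<psi>" using Mtau_mean[OF p] .
  define l where "l = real_of_ereal (Lf f (real n))"
  have Ll: "Lf f (real n) = ereal l" unfolding l_def by (rule Lf_real[OF f]) (use n in simp)
  have "Lf f (real n) < ereal (l + e)" using Ll e by simp
  then have "\<forall>\<^sub>F x in at_top. ereal ((1/real n) * integral {x..x + real n} f) < ereal (l + e)"
    unfolding Lf_def by (rule Limsup_lessD)
  then obtain X where X: "\<And>x. X \<le> x \<Longrightarrow> (1/real n) * integral {x..x + real n} f < l + e"
    unfolding eventually_at_top_linorder by auto
  have aC: "avg1 f \<in> Cub" using avg1_Cub[OF f] .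
  have hC: "shiftT (real j) (avg1 f) \<in> Cub" for j using Cub_shift[OF aC] by simp
  define h where "h = (\<lambda>x. \<Sum>j<n. (1 / real n) * shiftT (real j) (avg1 f) x)"
  have hCub: "h \<in> Cub" unfolding h_def by (rule Cub_sum) (rule hC)
  have "\<psi> h = (\<Sum>j<n. (1 / real n) * \<psi> (shiftT (real j) (avg1 f)))"
    unfolding h_def by (rule psi_sum[OF mc hC])
  also have "\<dots> = (\<Sum>j<n. (1 / real n) * \<psi> (avg1 f))" using Mtau_inv[OF p _ aC] by simp
  also have "\<dots> = \<psi> (avg1 f)" using n by simp
  finally have psih: "\<psi> h = \<psi> (avg1 f)" .
  have "\<psi> h \<le> l + e"
  proof (rule psi_le[OF p hCub, of "max X 0"])
    fix x assume x: "max X 0 \<le> x"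
    have "h x = (1 / real n) * (\<Sum>j<n. integral {x + real j * 1..x + real j * 1 + 1} f)"
      using x by (simp add: h_def shiftT_def avg1_def sum_distrib_left add.assoc)
    also have "(\<Sum>j<n. integral {x + real j * 1..x + real j * 1 + 1} f) = integral {x..x + real n * 1} f"
      by (rule int_sum[OF Linf_integrable_on[OF f], symmetric]) simp
    finally have "h x = (1 / real n) * integral {x..x + real n} f" by simp
    then show "h x \<le> l + e" using X[of x] x by simp
  qed simp
  then show "ereal (\<psi> (avg1 f)) \<le> Lf f (real n) + ereal e" using psih Ll by simp
qed

lemma exists_k:
  fixes \<theta> \<theta>0 :: real assumes t0: "0 < \<theta>0" and t: "0 \<le> \<theta>"
  shows "\<exists>k::nat. \<theta> \<le> real k * \<theta>0 \<and> real k * \<theta>0 < \<theta> + \<theta>0"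
proof -
  define y where "y = \<theta> / \<theta>0"
  have y0: "0 \<le> y" using t t0 by (simp add: y_def)
  have ky: "real (nat \<lceil>y\<rceil>) = of_int \<lceil>y\<rceil>" using y0 by simp
  have c: "of_int \<lceil>y\<rceil> - 1 < y" "y \<le> of_int \<lceil>y\<rceil>" using ceiling_correct[of y] by auto
  have "\<theta> = y * \<theta>0" using t0 by (simp add: y_def)
  moreover have "y * \<theta>0 \<le> of_int \<lceil>y\<rceil> * \<theta>0" by (rule mult_right_mono) (use c t0 in auto)
  moreover have "of_int \<lceil>y\<rceil> * \<theta>0 < (y + 1) * \<theta>0" by (rule mult_strict_right_mono) (use c t0 in auto)
  ultimately have "\<theta> \<le> real (nat \<lceil>y\<rceil>) * \<theta>0 \<and> real (nat \<lceil>y\<rceil>) * \<theta>0 < \<theta> + \<theta>0"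
    unfolding ky by (simp add: algebra_simps)
  then show ?thesis by blast
qed

lemma Lf_fek:
  assumes f: "f \<in> Linf" and t0: "0 < \<theta>0"
  shows "Limsup at_top (Lf f) \<le> Lf f \<theta>0"
proof (rule ereal_le_epsilon2)
  fix e :: real assume e: "0 < e"
  obtain B where B0: "B \<ge> 0" and B: "AE x in lebesgue. \<bar>f x\<bar> \<le> B" using Linf_bound[OF f] by auto
  define l0 where "l0 = real_of_ereal (Lf f \<theta>0)"
  have Ll: "Lf f \<theta>0 = ereal l0" unfolding l0_def by (rule Lf_real[OF f t0])
  define c where "c = l0 + e"
  define D where "D = \<bar>c\<bar> + B"
  have "Lf f \<theta>0 < ereal c" using Ll e by (simp add: c_def)
  then have "\<forall>\<^sub>F x in at_top. ereal ((1/\<theta>0) * integral {x..x + \<theta>0} f) < ereal c"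
    unfolding Lf_def by (rule Limsup_lessD)
  then obtain X where X: "\<And>x. X \<le> x \<Longrightarrow> (1/\<theta>0) * integral {x..x + \<theta>0} f < c"
    unfolding eventually_at_top_linorder by auto
  have X': "integral {x..x + \<theta>0} f \<le> \<theta>0 * c" if "X \<le> x" for x
  proof -
    have "(1/\<theta>0) * integral {x..x + \<theta>0} f < c" using X[OF that] .
    then have "integral {x..x + \<theta>0} f < c * \<theta>0" using t0 by (simp add: field_simps)
    then show ?thesis by (simp add: mult.commute)
  qed
  have key: "Lf f \<theta> \<le> ereal (c + D * \<theta>0 / \<theta>)" if th: "\<theta>0 \<le> \<theta>" for \<theta>
  proof -
    have th0: "0 < \<theta>" using th t0 by simp
    obtain k :: nat where k1: "\<theta> \<le> real k * \<theta>0" and k2: "real k * \<theta>0 < \<theta> + \<theta>0"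
      using exists_k[OF t0, of \<theta>] th0 by auto
    have bnd: "(1/\<theta>) * integral {x..x+\<theta>} f \<le> c + D * \<theta>0 / \<theta>" if x: "max X 0 \<le> x" for x
    proof -
      have "integral {x..x + real k * \<theta>0} f = (\<Sum>j<k. integral {x + real j * \<theta>0..x + real j * \<theta>0 + \<theta>0} f)"
        by (rule int_sum[OF Linf_integrable_on[OF f]]) (use t0 in simp)
      also have "\<dots> \<le> real (card {..<k}) * (\<theta>0 * c)"
      proof (rule sum_bounded_above)
        fix j assume "j \<in> {..<k}"
        have "0 \<le> real j * \<theta>0" using t0 by simp
        then have "X \<le> x + real j * \<theta>0" using x by linarith
        then show "integral {x + real j * \<theta>0..x + real j * \<theta>0 + \<theta>0} f \<le> \<theta>0 * c" by (rule X')
      qed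
      finally have S: "integral {x..x + real k * \<theta>0} f \<le> real k * \<theta>0 * c" by simp
      have "integral {x..x+\<theta>} f + integral {x+\<theta>..x + real k * \<theta>0} f = integral {x..x + real k * \<theta>0} f"
        by (rule Henstock_Kurzweil_Integration.integral_combine) (use th0 k1 Linf_integrable_on[OF f] in auto)
      moreover have "\<bar>integral {x+\<theta>..x + real k * \<theta>0} f\<bar> \<le> B * (x + real k * \<theta>0 - (x + \<theta>))"
        by (rule Linf_int_bound[OF f B]) (use k1 in simp)
      moreover have "B * (x + real k * \<theta>0 - (x + \<theta>)) \<le> B * \<theta>0"
        by (rule mult_left_mono) (use k2 B0 in auto)
      ultimately have I1: "integral {x..x+\<theta>} f \<le> real k * \<theta>0 * c + B * \<theta>0" using S by linarith
      define r where "r = real k * \<theta>0 - \<theta>"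
      have r0: "0 \<le> r" "r \<le> \<theta>0" using k1 k2 by (auto simp: r_def)
      have "real k * \<theta>0 * c = \<theta> * c + r * c" by (simp add: r_def algebra_simps)
      also have "r * c \<le> r * \<bar>c\<bar>" by (rule mult_left_mono) (use r0 in auto)
      also have "r * \<bar>c\<bar> \<le> \<theta>0 * \<bar>c\<bar>" by (rule mult_right_mono) (use r0 in auto)
      finally have "integral {x..x+\<theta>} f \<le> \<theta> * c + D * \<theta>0" using I1 by (simp add: D_def algebra_simps)
      then have "(1/\<theta>) * integral {x..x+\<theta>} f \<le> (1/\<theta>) * (\<theta> * c + D * \<theta>0)"
        by (rule mult_left_mono) (use th0 in simp)
      also have "\<dots> = c + D * \<theta>0 / \<theta>" using th0 by (simp add: field_simps)
      finally show ?thesis .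
    qed
    show ?thesis unfolding Lf_def
      by (rule Limsup_bounded) (use bnd in \<open>auto simp: eventually_at_top_linorder intro!: exI[of _ "max X 0"]\<close>)
  qed
  have lim: "((\<lambda>\<theta>::real. c + D * \<theta>0 / \<theta>) \<longlongrightarrow> c + 0) at_top"
    by (intro tendsto_add tendsto_const tendsto_divide_0[OF tendsto_const filterlim_at_top_imp_at_infinity[OF filterlim_ident]])
  have "Limsup at_top (Lf f) \<le> Limsup at_top (\<lambda>\<theta>. ereal (c + D * \<theta>0 / \<theta>))"
    by (rule Limsup_mono) (use key in \<open>auto simp: eventually_at_top_linorder\<close>)
  also have "\<dots> = ereal c"
    by (rule lim_imp_Limsup) (use tendsto_ereal[OF lim] in simp_all)
  finally show "Limsup at_top (Lf f) \<le> Lf f \<theta>0 + ereal e" using Ll by (simp add: c_def)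
qed

lemma Lf_conv:
  assumes f: "f \<in> Linf"
  shows "(Lf f \<longlongrightarrow> Limsup at_top (Lf f)) at_top"
proof (rule Liminf_eq_Limsup)
  have "Limsup at_top (Lf f) \<le> Liminf at_top (Lf f)"
    by (rule Liminf_bounded) (use Lf_fek[OF f] in \<open>auto simp: eventually_at_top_linorder intro!: exI[of _ 1]\<close>)
  moreover have "Liminf at_top (Lf f) \<le> Limsup at_top (Lf f)" by (rule Liminf_le_Limsup) simp
  ultimately show "Liminf at_top (Lf f) = Limsup at_top (Lf f)" by simp
qed simp_all

lemma psi_upper:
  assumes p: "\<psi> \<in> Mtau" and f: "f \<in> Linf"
  shows "ereal (\<psi> (avg1 f)) \<le> upper_M1 f"
proof -
  have u: "upper_M1 f = Limsup at_top (Lf f)"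
    unfolding upper_eq[OF f] by (rule tendsto_Lim) (use Lf_conv[OF f] in simp_all)
  have "((\<lambda>n. Lf f (real n)) \<longlongrightarrow> Limsup at_top (Lf f)) sequentially"
    by (rule filterlim_compose[OF Lf_conv[OF f] filterlim_real_sequentially])
  then show ?thesis unfolding u
    by (rule LIMSEQ_le_const) (use psi_Lf[OF p f] in \<open>auto intro!: exI[of _ 1]\<close>)
qed



definition hmap :: "((real \<Rightarrow> real) \<Rightarrow> real) \<Rightarrow> (real \<Rightarrow> real) \<Rightarrow> real" where
  "hmap \<phi> = (\<lambda>f. if f \<in> Cub then \<phi> f else 0)"

definition gmap :: "((real \<Rightarrow> real) \<Rightarrow> real) \<Rightarrow> (real \<Rightarrow> real) \<Rightarrow> real" where
  "gmap \<psi> = (\<lambda>f. if f \<in> Linf then \<psi> (avg1 f) else 0)"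

lemma hmap_in: assumes p: "\<phi> \<in> M1" shows "hmap \<phi> \<in> Mtau"
proof -
  have m: "mean_Linf \<phi>" using M1_mean[OF p] .
  have "lin_on Cub (hmap \<phi>)"
    unfolding lin_on_def
  proof (intro ballI allI)
    fix f g a b assume f: "f \<in> Cub" and g: "g \<in> Cub"
    show "hmap \<phi> (\<lambda>x. a * f x + b * g x) = a * hmap \<phi> f + b * hmap \<phi> g"
      using Cub_lin[OF f g, of a b] mean_Linf_lin[OF m Cub_Linf[OF f] Cub_Linf[OF g], of a b] f g
      by (simp add: hmap_def)
  qed
  moreover have "0 \<le> hmap \<phi> f" if f: "f \<in> Cub" and nn: "\<forall>x\<ge>0. 0 \<le> f x" for f
  proof -
    have "AE x in lebesgue. 0 \<le> x \<longrightarrow> 0 \<le> f x" using nn by simp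
    then show ?thesis using m Cub_Linf[OF f] f unfolding mean_Linf_def hmap_def by auto
  qed
  moreover have "hmap \<phi> one_plus = 1" using m one_plus_Cub unfolding mean_Linf_def hmap_def by auto
  moreover have "hmap \<phi> f = 0" if "f \<notin> Cub" for f using that by (simp add: hmap_def)
  moreover have "hmap \<phi> (shiftT s f) = hmap \<phi> f" if "0 \<le> s" "f \<in> Cub" for s f
    using phi_shift[OF p that(2,1)] Cub_shift[OF that(2,1)] that by (simp add: hmap_def)
  ultimately show ?thesis unfolding Mtau_def mean_Cub_def by blast
qed

lemma gmap_in: assumes p: "\<psi> \<in> Mtau" shows "gmap \<psi> \<in> M1"
proof -
  have m: "mean_Cub \<psi>" using Mtau_mean[OF p] .
  have "lin_on Linf (gmap \<psi>)"
    unfolding lin_on_def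
  proof (intro ballI allI)
    fix f g a b assume f: "f \<in> Linf" and g: "g \<in> Linf"
    show "gmap \<psi> (\<lambda>x. a * f x + b * g x) = a * gmap \<psi> f + b * gmap \<psi> g"
      using Linf_lin[OF f g, of a b] mean_Cub_lin[OF m avg1_Cub[OF f] avg1_Cub[OF g], of a b] f g
      by (simp add: gmap_def avg1_lin[OF f g])
  qed
  moreover have "0 \<le> gmap \<psi> f" if f: "f \<in> Linf" and nn: "AE x in lebesgue. 0 \<le> x \<longrightarrow> 0 \<le> f x" for f
    using mean_Cub_pos[OF m avg1_Cub[OF f] avg1_nonneg[OF f nn]] f by (simp add: gmap_def)
  moreover have "gmap \<psi> one_plus = 1"
    using Cub_Linf[OF one_plus_Cub] mean_Cub_one[OF m] by (simp add: gmap_def avg1_one)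
  moreover have "gmap \<psi> f = 0" if "f \<notin> Linf" for f using that by (simp add: gmap_def)
  moreover have "ereal (gmap \<psi> f) \<le> upper_M1 f" if "f \<in> Linf" for f
    using psi_upper[OF p that] that by (simp add: gmap_def)
  ultimately show ?thesis unfolding M1_def mean_Linf_def by blast
qed

lemma gh: assumes p: "\<phi> \<in> M1" shows "gmap (hmap \<phi>) = \<phi>"
proof
  fix f
  show "gmap (hmap \<phi>) f = \<phi> f"
  proof (cases "f \<in> Linf")
    case True
    then show ?thesis using avg1_Cub[OF True] phi_avg1[OF p True] by (simp add: gmap_def hmap_def)
  next
    case False
    then show ?thesis using M1_mean[OF p] unfolding mean_Linf_def by (simp add: gmap_def)
  qed
qed

lemma hg: assumes p: "\<psi> \<in> Mtau" shows "hmap (gmap \<psi>) = \<psi>"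
proof
  fix f
  show "hmap (gmap \<psi>) f = \<psi> f"
  proof (cases "f \<in> Cub")
    case True
    then show ?thesis using Cub_Linf[OF True] psi_avg1[OF p True] by (simp add: gmap_def hmap_def)
  next
    case False
    then show ?thesis using Mtau_mean[OF p] unfolding mean_Cub_def by (simp add: hmap_def)
  qed
qed

lemma topspace_ws: "topspace (weak_star S) = S"
  unfolding weak_star_def by simp

lemma cont_coord:
  "continuous_map (weak_star S) euclideanreal (\<lambda>\<phi>. \<phi> k)"
  unfolding weak_star_def
  by (rule continuous_map_from_subtopology[OF continuous_map_product_projection]) simp

lemma hmap_cont: "continuous_map (weak_star M1) (weak_star Mtau) hmap"
proof -
  have "continuous_map (weak_star M1) (product_topology (\<lambda>_. euclideanreal) UNIV) hmap"
    unfolding continuous_map_componentwise_UNIV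
  proof
    fix k
    show "continuous_map (weak_star M1) euclideanreal (\<lambda>\<phi>. hmap \<phi> k)"
      by (cases "k \<in> Cub") (simp_all add: hmap_def cont_coord)
  qed
  moreover have "hmap ` topspace (weak_star M1) \<subseteq> Mtau" using hmap_in by (auto simp: topspace_ws)
  ultimately show ?thesis unfolding weak_star_def[of Mtau] by (simp add: continuous_map_in_subtopology image_subset_iff_funcset)
qed

lemma gmap_cont: "continuous_map (weak_star Mtau) (weak_star M1) gmap"
proof -
  have "continuous_map (weak_star Mtau) (product_topology (\<lambda>_. euclideanreal) UNIV) gmap"
    unfolding continuous_map_componentwise_UNIV
  proof
    fix k
    show "continuous_map (weak_star Mtau) euclideanreal (\<lambda>\<psi>. gmap \<psi> k)"
      by (cases "k \<in> Linf") (simp_all add: gmap_def cont_coord)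
  qed
  moreover have "gmap ` topspace (weak_star Mtau) \<subseteq> M1" using gmap_in by (auto simp: topspace_ws)
  ultimately show ?thesis unfolding weak_star_def[of M1] by (simp add: continuous_map_in_subtopology image_subset_iff_funcset)
qed

theorem theorem3p6:
  shows "\<exists>h. homeomorphic_map (weak_star M1) (weak_star Mtau) h
           \<and> (\<forall>\<phi>\<in>M1. \<forall>\<psi>\<in>M1. \<forall>t::real. 0 \<le> t \<and> t \<le> 1 \<longrightarrow>
                h (\<lambda>f. t * \<phi> f + (1 - t) * \<psi> f) = (\<lambda>f. t * h \<phi> f + (1 - t) * h \<psi> f))"
proof (intro exI[of _ hmap] conjI)
  have "homeomorphic_maps (weak_star M1) (weak_star Mtau) hmap gmap"
    unfolding homeomorphic_maps_def using hmap_cont gmap_cont gh hg by (simp add: topspace_ws)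
  then show "homeomorphic_map (weak_star M1) (weak_star Mtau) hmap"
    unfolding homeomorphic_map_maps by blast
  show "\<forall>\<phi>\<in>M1. \<forall>\<psi>\<in>M1. \<forall>t::real. 0 \<le> t \<and> t \<le> 1 \<longrightarrow>
      hmap (\<lambda>f. t * \<phi> f + (1 - t) * \<psi> f) = (\<lambda>f. t * hmap \<phi> f + (1 - t) * hmap \<psi> f)"
    by (auto simp: hmap_def fun_eq_iff)
qed

end
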